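(* Let $G$ be a compact subgroup of $\operatorname{O}(3)$. Let $L_i$ ($i\ge1$) and $L$ be $n$-component links in $\mathbb{R}^3$, each given by a locally constant-speed parametrization $S^1\sqcup\cdots\sqcup S^1\to\mathbb{R}^3$ of the disjoint union of $n$ unit circles, and suppose $L_i\to L$ in the $C^1$ metric. If each $L_i$ is $G$-invariant, then $L$ is $G$-invariant; if each $L_i$ is oriented $G$-invariant, then $L$ is oriented $G$-invariant.
   Context: $G\subset\operatorname{O}(3)$ acts linearly on $\mathbb{R}^3$. A link $L$ is $G$-invariant if $g(\operatorname{Image}L)=\operatorname{Image}L$ for all $g\in G$. Equivalently (since isometries preserve speed), for each $g\in G$ there is $\hat g$ in the isometry group $\operatorname{O}(2)^n\rtimes S_n$ of $S^1\sqcup\cdots\sqcup S^1$ (acting by $(\gamma_1,\dots,\gamma_n,p)(\phi,i)=(\gamma_i(\phi),p(i))$) with $g\circ L=L\circ\hat g$. $L$ is oriented $G$-invariant if for every $g\in G$ such a $\hat g$ can be taken in $\operatorname{SO}(2)^n\rtimes S_n$, i.e. $g$ maps each component orientation-preservingly onto a component. *)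

theory Defs
  imports "HOL-Analysis.Analysis"
begin

text \<open>An n-component link is modelled as L :: nat => real => real^3, where L i phi is the
  point of the i-th circle (i < n) at angle phi; each component is 2pi-periodic.
  The disjoint union of n unit circles is {0..<n} x (R / 2pi Z).\<close>

definition link_image :: "nat \<Rightarrow> (nat \<Rightarrow> real \<Rightarrow> real^3) \<Rightarrow> (real^3) set" where
  "link_image n L = {L i \<phi> | i \<phi>. i < n}"

text \<open>A link given by a locally constant-speed C^1 parametrization: periodic, C^1,
  injective on the disjoint union of circles (an embedding, the domain being compact),
  and of constant speed on each component.\<close>
definition cs_link :: "nat \<Rightarrow> (nat \<Rightarrow> real \<Rightarrow> real^3) \<Rightarrow> bool" where
  "cs_link n L \<longleftrightarrow>
     (\<forall>i<n. \<forall>\<phi>. L i (\<phi> + 2 * pi) = L i \<phi>) \<and>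
     (\<forall>i<n. (\<forall>\<phi>. L i differentiable (at \<phi>)) \<and>
            continuous_on UNIV (\<lambda>\<phi>. vector_derivative (L i) (at \<phi>))) \<and>
     (\<forall>i<n. \<forall>j<n. \<forall>\<phi>\<in>{0..<2*pi}. \<forall>\<psi>\<in>{0..<2*pi}.
         L i \<phi> = L j \<psi> \<longrightarrow> i = j \<and> \<phi> = \<psi>) \<and>
     (\<forall>i<n. \<exists>c. \<forall>\<phi>. norm (vector_derivative (L i) (at \<phi>)) = c)"

definition C1_converges :: "nat \<Rightarrow> (nat \<Rightarrow> nat \<Rightarrow> real \<Rightarrow> real^3) \<Rightarrow> (nat \<Rightarrow> real \<Rightarrow> real^3) \<Rightarrow> bool" where
  "C1_converges n Ls L \<longleftrightarrow>
     (\<forall>\<epsilon>>0. \<forall>\<^sub>F k in sequentially. \<forall>i<n. \<forall>\<phi>.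
        norm (Ls k i \<phi> - L i \<phi>) +
        norm (vector_derivative (Ls k i) (at \<phi>) - vector_derivative (L i) (at \<phi>)) \<le> \<epsilon>)"

definition G_invariant :: "(real^3^3) set \<Rightarrow> nat \<Rightarrow> (nat \<Rightarrow> real \<Rightarrow> real^3) \<Rightarrow> bool" where
  "G_invariant G n L \<longleftrightarrow> (\<forall>g\<in>G. (\<lambda>x. g *v x) ` link_image n L = link_image n L)"

text \<open>Oriented invariance: each g acts via an element of SO(2)^n semidirect S_n, i.e.
  rotations phi |-> phi + a i and a permutation p of the components.\<close>
definition oriented_G_invariant :: "(real^3^3) set \<Rightarrow> nat \<Rightarrow> (nat \<Rightarrow> real \<Rightarrow> real^3) \<Rightarrow> bool" where
  "oriented_G_invariant G n L \<longleftrightarrow>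
     (\<forall>g\<in>G. \<exists>p a. p permutes {..<n} \<and>
        (\<forall>i<n. \<forall>\<phi>. g *v L i \<phi> = L (p i) (\<phi> + a i)))"

definition compact_subgroup_O3 :: "(real^3^3) set \<Rightarrow> bool" where
  "compact_subgroup_O3 G \<longleftrightarrow> compact G \<and> (\<forall>g\<in>G. orthogonal_matrix g) \<and> mat 1 \<in> G \<and>
     (\<forall>g\<in>G. \<forall>h\<in>G. g ** h \<in> G) \<and> (\<forall>g\<in>G. matrix_inv g \<in> G)"

end

theory Submission
  imports Defs
begin

lemma periodic_int:
  fixes f :: "real \<Rightarrow> 'b"
  assumes p: "\<forall>\<phi>. f (\<phi> + 2 * pi) = f \<phi>"
  shows "f (x + 2 * pi * of_int m) = f x"
proof -
  have nat: "f (y + 2 * pi * real k) = f y" for y k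
  proof (induction k)
    case 0 then show ?case by simp
  next
    case (Suc k)
    have "y + 2 * pi * real (Suc k) = (y + 2 * pi * real k) + 2 * pi"
      by (simp add: distrib_left)
    then have "f (y + 2 * pi * real (Suc k)) = f ((y + 2 * pi * real k) + 2 * pi)"
      by (rule arg_cong)
    also have "\<dots> = f (y + 2 * pi * real k)" using p by blast
    finally show ?case using Suc by simp
  qed
  show ?thesis
  proof (cases "m \<ge> 0")
    case True
    then have "(of_int m :: real) = real (nat m)" by simp
    then show ?thesis using nat[of x "nat m"] by metis
  next
    case False
    then have m: "(of_int m :: real) = - real (nat (-m))" by simp
    have "x = (x + 2 * pi * of_int m) + 2 * pi * real (nat (-m))"
      unfolding m by simp
    then show ?thesis using nat[of "x + 2 * pi * of_int m" "nat (-m)"] by metis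
  qed
qed

lemma shift_reduce:
  assumes p: "\<forall>\<phi>. f (\<phi> + 2 * pi) = f \<phi>"
  shows "\<exists>b\<in>{0..<2*pi}. \<forall>\<phi>. f (\<phi> + a) = f (\<phi> + b)"
proof -
  define m where "m = \<lfloor>a / (2*pi)\<rfloor>"
  define b where "b = a - 2 * pi * of_int m"
  have "of_int m \<le> a / (2*pi)" "a / (2*pi) < of_int m + 1"
    unfolding m_def by linarith+
  then have "2*pi * of_int m \<le> a" "a < 2*pi*(of_int m + 1)"
    by (simp_all add: field_simps)
  then have b: "b \<in> {0..<2*pi}" unfolding b_def by (auto simp: algebra_simps)
  have "f (\<phi> + a) = f (\<phi> + b)" for \<phi>
    using periodic_int[OF p, of "\<phi> + b" m] unfolding b_def by (simp add: algebra_simps)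
  then show ?thesis using b by blast
qed

lemma point_reduce:
  assumes p: "\<forall>\<phi>. f (\<phi> + 2 * pi) = f \<phi>"
  shows "\<exists>b\<in>{0..<2*pi}. f a = f b"
  using shift_reduce[OF p, of a] by (metis add_0)

lemma limit_lemma:
  fixes Ms :: "nat \<Rightarrow> nat \<Rightarrow> real \<Rightarrow> real^3" and J :: "nat \<Rightarrow> nat" and B :: "nat \<Rightarrow> real"
  assumes unif: "\<And>\<epsilon>. \<epsilon> > 0 \<Longrightarrow> \<forall>\<^sub>F k in sequentially. \<forall>i<n. \<forall>\<phi>. norm (Ms k i \<phi> - L i \<phi>) \<le> \<epsilon>"
    and cont: "continuous_on UNIV (L j)"
    and J: "J \<longlonglongrightarrow> j" and B: "B \<longlonglongrightarrow> b" and jn: "j < n"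
  shows "(\<lambda>k. Ms k (J k) (B k)) \<longlonglongrightarrow> L j b"
proof -
  have evJ: "\<forall>\<^sub>F k in sequentially. J k = j"
    using topological_tendstoD[OF J, of "{j}"] by (simp add: open_discrete)
  have d0: "(\<lambda>k. Ms k j (B k) - L j (B k)) \<longlonglongrightarrow> 0"
  proof (rule tendstoI)
    fix e :: real assume e: "e > 0"
    have "\<forall>\<^sub>F k in sequentially. \<forall>i<n. \<forall>\<phi>. norm (Ms k i \<phi> - L i \<phi>) \<le> e/2"
      using unif[of "e/2"] e by linarith
    then show "\<forall>\<^sub>F k in sequentially. dist (Ms k j (B k) - L j (B k)) 0 < e"
    proof (rule eventually_mono)
      fix k assume "\<forall>i<n. \<forall>\<phi>. norm (Ms k i \<phi> - L i \<phi>) \<le> e/2"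
      then have "norm (Ms k j (B k) - L j (B k)) \<le> e/2" using jn by blast
      then show "dist (Ms k j (B k) - L j (B k)) 0 < e" using e by (simp add: dist_norm)
    qed
  qed
  have "(\<lambda>k. L j (B k)) \<longlonglongrightarrow> L j b"
    by (rule continuous_on_tendsto_compose[OF cont B]) simp_all
  then have "(\<lambda>k. (Ms k j (B k) - L j (B k)) + L j (B k)) \<longlonglongrightarrow> 0 + L j b"
    using d0 by (intro tendsto_add)
  then have "(\<lambda>k. Ms k j (B k)) \<longlonglongrightarrow> L j b" by simp
  then show ?thesis
    by (rule Lim_transform_eventually) (use evJ in \<open>auto elim: eventually_mono\<close>)
qed


lemma cs_periodic: "cs_link n L \<Longrightarrow> i < n \<Longrightarrow> \<forall>\<phi>. L i (\<phi> + 2 * pi) = L i \<phi>"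
  unfolding cs_link_def by blast

lemma cs_cont: "cs_link n L \<Longrightarrow> i < n \<Longrightarrow> continuous_on UNIV (L i)"
  unfolding cs_link_def
  by (meson continuous_at_imp_continuous_on differentiable_imp_continuous_within)

lemma cs_inj: "cs_link n L \<Longrightarrow> i < n \<Longrightarrow> j < n \<Longrightarrow> \<phi> \<in> {0..<2*pi} \<Longrightarrow> \<psi> \<in> {0..<2*pi}
   \<Longrightarrow> L i \<phi> = L j \<psi> \<Longrightarrow> i = j"
  unfolding cs_link_def by blast

lemma C1_unif:
  assumes "C1_converges n Ls L" "\<epsilon> > 0"
  shows "\<forall>\<^sub>F k in sequentially. \<forall>i<n. \<forall>\<phi>. norm (Ls k i \<phi> - L i \<phi>) \<le> \<epsilon>"
proof -
  have "\<forall>\<^sub>F k in sequentially. \<forall>i<n. \<forall>\<phi>.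
        norm (Ls k i \<phi> - L i \<phi>) +
        norm (vector_derivative (Ls k i) (at \<phi>) - vector_derivative (L i) (at \<phi>)) \<le> \<epsilon>"
    using assms unfolding C1_converges_def by blast
  then show ?thesis
    by (rule eventually_mono) (smt (verit) norm_ge_zero)
qed

lemma extract_sub:
  fixes Ms :: "nat \<Rightarrow> nat \<Rightarrow> real \<Rightarrow> real^3" and J :: "nat \<Rightarrow> nat" and B :: "nat \<Rightarrow> real"
  assumes unif: "\<And>\<epsilon>. \<epsilon> > 0 \<Longrightarrow> \<forall>\<^sub>F k in sequentially. \<forall>i<n. \<forall>\<phi>. norm (Ms k i \<phi> - L i \<phi>) \<le> \<epsilon>"
    and cont: "\<And>j. j < n \<Longrightarrow> continuous_on UNIV (L j)"
    and JB: "\<And>k. J k < n \<and> B k \<in> {0..2*pi}"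
  shows "\<exists>j<n. \<exists>b r. strict_mono r \<and>
     (\<forall>t. (\<lambda>k. Ms (r k) (J (r k)) (t + B (r k))) \<longlonglongrightarrow> L j (t + b))"
proof -
  have "compact ({..<n} \<times> {0..2*pi})"
    by (intro compact_Times finite_imp_compact compact_Icc) simp
  then have "seq_compact ({..<n} \<times> {0..2*pi})" by (rule compact_imp_seq_compact)
  moreover have "\<forall>k. (J k, B k) \<in> {..<n} \<times> {0..2*pi}" using JB by auto
  ultimately obtain l r where l: "l \<in> {..<n} \<times> {0..2*pi}" and r: "strict_mono r"
    and lim: "((\<lambda>k. (J k, B k)) \<circ> r) \<longlonglongrightarrow> l"
    unfolding seq_compact_def by meson
  obtain j b where lj: "l = (j, b)" by (cases l)
  have jn: "j < n" using l lj by auto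
  have LJ: "(\<lambda>k. J (r k)) \<longlonglongrightarrow> j" using tendsto_fst[OF lim] lj by (simp add: o_def)
  have LB: "(\<lambda>k. B (r k)) \<longlonglongrightarrow> b" using tendsto_snd[OF lim] lj by (simp add: o_def)
  have unif': "\<forall>\<^sub>F k in sequentially. \<forall>i<n. \<forall>\<phi>. norm (Ms (r k) i \<phi> - L i \<phi>) \<le> \<epsilon>"
    if "\<epsilon> > 0" for \<epsilon>
    using eventually_subseq[OF r unif[OF that]] by simp
  have "(\<lambda>k. Ms (r k) (J (r k)) (t + B (r k))) \<longlonglongrightarrow> L j (t + b)" for t
    by (rule limit_lemma[where Ms="\<lambda>k. Ms (r k)", OF unif' cont[OF jn] LJ _ jn])
       (simp_all add: LB tendsto_add)
  then show ?thesis using jn r by blast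
qed

lemma orth_inj: "orthogonal_matrix (g::real^3^3) \<Longrightarrow> g *v x = g *v y \<Longrightarrow> x = y"
  by (metis orthogonal_matrix_def matrix_vector_mul_assoc matrix_vector_mul_lid)

lemma orth_inv: "orthogonal_matrix (g::real^3^3) \<Longrightarrow> g *v (matrix_inv g *v y) = y"
proof -
  assume "orthogonal_matrix g"
  then have "invertible g" unfolding orthogonal_matrix_def invertible_def by blast
  then have "g ** matrix_inv g = mat 1"
    unfolding invertible_def matrix_inv_def by (rule someI_ex[THEN conjunct1])
  then show ?thesis by (simp add: matrix_vector_mul_assoc)
qed

theorem lemma3p3:
  fixes G :: "(real^3^3) set" and n :: nat
    and Ls :: "nat \<Rightarrow> nat \<Rightarrow> real \<Rightarrow> real^3" and L :: "nat \<Rightarrow> real \<Rightarrow> real^3"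
  assumes "compact_subgroup_O3 G"
    and "\<And>k. cs_link n (Ls k)"
    and "cs_link n L"
    and "C1_converges n Ls L"
  shows "((\<forall>k. G_invariant G n (Ls k)) \<longrightarrow> G_invariant G n L) \<and>
         ((\<forall>k. oriented_G_invariant G n (Ls k)) \<longrightarrow> oriented_G_invariant G n L)"
proof -
  note G = assms(1)[unfolded compact_subgroup_O3_def]
  have unif: "\<And>\<epsilon>. \<epsilon> > 0 \<Longrightarrow> \<forall>\<^sub>F k in sequentially. \<forall>i<n. \<forall>\<phi>. norm (Ls k i \<phi> - L i \<phi>) \<le> \<epsilon>"
    using C1_unif[OF assms(4)] by blast
  have cont: "\<And>j. j < n \<Longrightarrow> continuous_on UNIV (L j)" using cs_cont[OF assms(3)] by blast
  have ptlim: "(\<lambda>k. g *v Ls k i \<phi>) \<longlonglongrightarrow> g *v L i \<phi>" if "i < n" for g i \<phi>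
  proof -
    have "(\<lambda>k. Ls k i \<phi>) \<longlonglongrightarrow> L i \<phi>"
      using limit_lemma[where Ms=Ls and J="\<lambda>_. i" and B="\<lambda>_. \<phi>", OF unif cont[OF that] _ _ that]
      by simp
    then show ?thesis by (intro bounded_linear.tendsto[OF matrix_vector_mul_bounded_linear])
  qed
  have P1: "G_invariant G n L" if H: "\<forall>k. G_invariant G n (Ls k)"
  proof -
    have sub: "(\<lambda>x. g *v x) ` link_image n L \<subseteq> link_image n L" if g: "g \<in> G" for g
    proof
      fix y assume "y \<in> (\<lambda>x. g *v x) ` link_image n L"
      then obtain i \<phi> where i: "i < n" and y: "y = g *v L i \<phi>"
        unfolding link_image_def by blast
      have "\<forall>k. \<exists>j b. j < n \<and> b \<in> {0..2*pi} \<and> g *v Ls k i \<phi> = Ls k j (0 + b)"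
      proof
        fix k
        have "g *v Ls k i \<phi> \<in> (\<lambda>x. g *v x) ` link_image n (Ls k)"
          unfolding link_image_def using i by blast
        then have "g *v Ls k i \<phi> \<in> link_image n (Ls k)"
          using H g unfolding G_invariant_def by blast
        then obtain j \<psi> where j: "j < n" and e: "g *v Ls k i \<phi> = Ls k j \<psi>"
          unfolding link_image_def by blast
        obtain b where "b \<in> {0..<2*pi}" "Ls k j \<psi> = Ls k j b"
          using point_reduce[OF cs_periodic[OF assms(2) j]] by blast
        then show "\<exists>j b. j < n \<and> b \<in> {0..2*pi} \<and> g *v Ls k i \<phi> = Ls k j (0 + b)"
          using j e by (intro exI[of _ j] exI[of _ b]) auto
      qed
      then obtain J B where JB: "\<And>k. J k < n \<and> B k \<in> {0..2*pi}"
        and eq: "\<And>k. g *v Ls k i \<phi> = Ls k (J k) (0 + B k)" by metis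
      obtain j b r where j: "j < n" and r: "strict_mono r"
        and lim: "\<forall>t. (\<lambda>k. Ls (r k) (J (r k)) (t + B (r k))) \<longlonglongrightarrow> L j (t + b)"
        using extract_sub[where Ms=Ls and L=L and n=n and J=J and B=B] unif cont JB by blast
      have "(\<lambda>k. g *v Ls (r k) i \<phi>) \<longlonglongrightarrow> g *v L i \<phi>"
        using LIMSEQ_subseq_LIMSEQ[OF ptlim[OF i] r] by (simp add: o_def)
      moreover have "(\<lambda>k. g *v Ls (r k) i \<phi>) \<longlonglongrightarrow> L j (0 + b)"
        using spec[OF lim, of 0] eq by simp
      ultimately have "g *v L i \<phi> = L j (0 + b)" by (rule LIMSEQ_unique)
      then show "y \<in> link_image n L" using y j unfolding link_image_def by auto
    qed
    show ?thesis unfolding G_invariant_def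
    proof (intro ballI equalityI sub)
      fix g assume g: "g \<in> G"
      show "link_image n L \<subseteq> (\<lambda>x. g *v x) ` link_image n L"
      proof
        fix y assume y: "y \<in> link_image n L"
        have "matrix_inv g *v y \<in> link_image n L" using sub[of "matrix_inv g"] G g y by blast
        moreover have "y = g *v (matrix_inv g *v y)" using orth_inv G g by metis
        ultimately show "y \<in> (\<lambda>x. g *v x) ` link_image n L" by blast
      qed
    qed
  qed
  have P2: "oriented_G_invariant G n L" if H: "\<forall>k. oriented_G_invariant G n (Ls k)"
    unfolding oriented_G_invariant_def
  proof
    fix g assume g: "g \<in> G"
    have orth: "orthogonal_matrix g" using G g by blast
    have comp: "\<exists>j<n. \<exists>b. \<forall>\<phi>. g *v L i \<phi> = L j (\<phi> + b)" if i: "i < n" for i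
    proof -
      have "\<forall>k. \<exists>j b. j < n \<and> b \<in> {0..2*pi} \<and> (\<forall>\<phi>. g *v Ls k i \<phi> = Ls k j (\<phi> + b))"
      proof
        fix k
        obtain p a where p: "p permutes {..<n}" and pa: "\<forall>i<n. \<forall>\<phi>. g *v Ls k i \<phi> = Ls k (p i) (\<phi> + a i)"
          using H g unfolding oriented_G_invariant_def by blast
        have j: "p i < n" using permutes_in_image[OF p] i by simp
        obtain b where "b \<in> {0..<2*pi}" "\<forall>\<phi>. Ls k (p i) (\<phi> + a i) = Ls k (p i) (\<phi> + b)"
          using shift_reduce[OF cs_periodic[OF assms(2) j]] by blast
        then show "\<exists>j b. j < n \<and> b \<in> {0..2*pi} \<and> (\<forall>\<phi>. g *v Ls k i \<phi> = Ls k j (\<phi> + b))"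
          using j pa i by (intro exI[of _ "p i"] exI[of _ b]) auto
      qed
      then obtain J B where JB: "\<And>k. J k < n \<and> B k \<in> {0..2*pi}"
        and eq: "\<And>k \<phi>. g *v Ls k i \<phi> = Ls k (J k) (\<phi> + B k)" by metis
      obtain j b r where j: "j < n" and r: "strict_mono r"
        and lim: "\<forall>t. (\<lambda>k. Ls (r k) (J (r k)) (t + B (r k))) \<longlonglongrightarrow> L j (t + b)"
        using extract_sub[where Ms=Ls and L=L and n=n and J=J and B=B] unif cont JB by blast
      have "g *v L i \<phi> = L j (\<phi> + b)" for \<phi>
      proof -
        have "(\<lambda>k. g *v Ls (r k) i \<phi>) \<longlonglongrightarrow> g *v L i \<phi>"
          using LIMSEQ_subseq_LIMSEQ[OF ptlim[OF i] r] by (simp add: o_def)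
        moreover have "(\<lambda>k. g *v Ls (r k) i \<phi>) \<longlonglongrightarrow> L j (\<phi> + b)"
          using lim eq by simp
        ultimately show ?thesis by (rule LIMSEQ_unique)
      qed
      then show ?thesis using j by blast
    qed
    then obtain P A where PA: "\<And>i. i < n \<Longrightarrow> P i < n \<and> (\<forall>\<phi>. g *v L i \<phi> = L (P i) (\<phi> + A i))"
      by metis
    define p where "p i = (if i < n then P i else i)" for i
    have injP: "inj_on p {..<n}"
    proof (rule inj_onI)
      fix i i' assume i: "i \<in> {..<n}" and i': "i' \<in> {..<n}" and e: "p i = p i'"
      then have e': "P i = P i'" unfolding p_def by auto
      have "g *v L i 0 = L (P i) (A i)" using PA[of i] i by simp
      moreover have "g *v L i' (A i - A i') = L (P i') (A i - A i' + A i')" using PA[of i'] i' by blast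
      ultimately have "g *v L i 0 = g *v L i' (A i - A i')" using e' by simp
      then have eq0: "L i 0 = L i' (A i - A i')" by (rule orth_inj[OF orth])
      obtain t where t: "t \<in> {0..<2*pi}" "L i' (A i - A i') = L i' t"
        using point_reduce[OF cs_periodic[OF assms(3)]] i' by blast
      show "i = i'"
        using cs_inj[OF assms(3), of i i' 0 t] i i' t eq0 by simp
    qed
    have img: "p ` {..<n} \<subseteq> {..<n}" unfolding p_def using PA by auto
    have "p ` {..<n} = {..<n}" by (rule endo_inj_surj[OF _ img injP]) simp
    then have "p permutes {..<n}"
      using injP by (intro bij_imp_permutes) (auto simp: bij_betw_def p_def)
    moreover have "\<forall>i<n. \<forall>\<phi>. g *v L i \<phi> = L (p i) (\<phi> + A i)"
      using PA unfolding p_def by simp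
    ultimately show "\<exists>p a. p permutes {..<n} \<and> (\<forall>i<n. \<forall>\<phi>. g *v L i \<phi> = L (p i) (\<phi> + a i))"
      by blast
  qed
  show ?thesis using P1 P2 by blast
qed

end
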